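(* Let the configuration space be $\mathbb{R}^n$ with each coordinate an independent double integrator $\ddot q_i=a_i$, $a_i\in[-1,1]$, and let $q_I,q_G\in\mathcal{C}_{free}$. Any piecewise-linear path $\tau:[0,1]\to\mathcal{C}_{free}$ with $\tau(0)=q_I$, $\tau(1)=q_G$ is converted by the bang-bang transform into an acceleration control $a(\cdot):[0,t_F]\to[-1,1]^n$ whose state trajectory from $x_I=(q_I,\mathbf{0})$ lies in $X_{free}=\{(q,\dot q): q\in\mathcal{C}_{free}\}$ and reaches $x_G=(q_G,\mathbf{0})$ at time $t_F$; i.e., it yields a solution to the rest-to-rest kinodynamic planning problem for the double integrator system.
   Context: $\mathcal{C}_{free}$ is the open set of collision-free configurations. Bang-bang transform: for each edge of $\tau$ from vertex $q$ to the next vertex $q'$, let $v=q'-q$, $\hat v=v/\|v\|$, $s=\max_i|\hat v_i|$, acceleration vector $a=\hat v/s$ and $t=\sqrt{s\|v\|}$; the edge control is apply $a$ for time $t$ then $-a$ for time $t$. The edge controls are concatenated in order along the path. *)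

theory Defs
  imports "HOL-Analysis.Analysis"
begin

text \<open>Configurations are vectors in real^'n. A piecewise-linear path is given by
its list of vertices; each coordinate is a double integrator with |a_i| <= 1.\<close>

definition edge_s :: "real^'n \<Rightarrow> real^'n \<Rightarrow> real" where
  "edge_s q q' = (let v = q' - q; vh = v /\<^sub>R norm v in Max (range (\<lambda>i. \<bar>vh $ i\<bar>)))"

definition edge_accel :: "real^'n \<Rightarrow> real^'n \<Rightarrow> real^'n" where
  "edge_accel q q' = (let v = q' - q; vh = v /\<^sub>R norm v in vh /\<^sub>R edge_s q q')"

definition edge_time :: "real^'n \<Rightarrow> real^'n \<Rightarrow> real" where
  "edge_time q q' = sqrt (edge_s q q' * norm (q' - q))"

fun bang_bang :: "(real^'n) list \<Rightarrow> real \<Rightarrow> real^'n" where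
  "bang_bang (q # q' # rest) t =
     (if t < edge_time q q' then edge_accel q q'
      else if t < 2 * edge_time q q' then - edge_accel q q'
      else bang_bang (q' # rest) (t - 2 * edge_time q q'))"
| "bang_bang _ t = 0"

fun bang_bang_time :: "(real^'n) list \<Rightarrow> real" where
  "bang_bang_time (q # q' # rest) = 2 * edge_time q q' + bang_bang_time (q' # rest)"
| "bang_bang_time _ = 0"

definition di_velocity :: "(real \<Rightarrow> real^'n) \<Rightarrow> real \<Rightarrow> real^'n" where
  "di_velocity u t = integral {0..t} u"

definition di_position :: "real^'n \<Rightarrow> (real \<Rightarrow> real^'n) \<Rightarrow> real \<Rightarrow> real^'n" where
  "di_position q0 u t = q0 + integral {0..t} (di_velocity u)"

end

theory Submission
  imports Defs
begin

lemma edge_facts: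
  fixes q q' :: "real^'n"
  shows "edge_time q q' \<ge> 0" "(edge_time q q' ^ 2) *\<^sub>R edge_accel q q' = q' - q"
    "\<bar>edge_accel q q' $ i\<bar> \<le> 1"
proof -
  define v where "v = q' - q"
  define vh where "vh = v /\<^sub>R norm v"
  define s where "s = Max (range (\<lambda>i. \<bar>vh $ i\<bar>))"
  have sdef: "edge_s q q' = s" unfolding edge_s_def s_def vh_def v_def Let_def by simp
  have adef: "edge_accel q q' = vh /\<^sub>R s" unfolding edge_accel_def sdef vh_def v_def Let_def by simp
  have tdef: "edge_time q q' = sqrt (s * norm v)" unfolding edge_time_def sdef v_def by simp
  have fin: "finite (range (\<lambda>i. \<bar>vh $ i\<bar>))" by simp
  have sge: "\<bar>vh $ j\<bar> \<le> s" for j unfolding s_def by (rule Max_ge[OF fin]) auto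
  have s0: "s \<ge> 0" using sge[of i] by linarith
  show "edge_time q q' \<ge> 0" unfolding tdef using s0 by simp
  show "(edge_time q q' ^ 2) *\<^sub>R edge_accel q q' = q' - q"
  proof (cases "v = 0")
    case True hence "vh = 0" by (simp add: vh_def)
    hence "edge_accel q q' = 0" by (simp add: adef)
    thus ?thesis using True by (simp add: v_def)
  next
    case False
    then obtain j where "v $ j \<noteq> 0" by (metis vec_eq_iff zero_index)
    hence "vh $ j \<noteq> 0" using False by (simp add: vh_def)
    hence spos: "s > 0" using sge[of j] by linarith
    have "(edge_time q q' ^ 2) = s * norm v" unfolding tdef using s0 by simp
    then show ?thesis using spos False by (simp add: adef vh_def v_def field_simps)
  qed
  show "\<bar>edge_accel q q' $ i\<bar> \<le> 1"
  proof (cases "s = 0")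
    case True then show ?thesis by (simp add: adef)
  next
    case False
    hence "s > 0" using s0 by simp
    then show ?thesis using sge[of i] by (simp add: adef abs_mult field_simps)
  qed
qed

lemma bb_bound: "\<bar>bang_bang qs t $ i\<bar> \<le> 1"
  by (induction qs t rule: bang_bang.induct) (auto simp: edge_facts)

lemma bbt_nonneg: "bang_bang_time qs \<ge> 0"
  by (induction qs rule: bang_bang_time.induct) (auto simp: edge_facts)

lemma poly_int:
  fixes a :: "'a::banach" and t :: real
  assumes "t \<ge> 0"
  shows "((\<lambda>s. (\<alpha> + \<beta> * s) *\<^sub>R a) has_integral ((\<alpha> * t + \<beta> * t^2 / 2) *\<^sub>R a)) {0..t}"
proof -
  have "((\<lambda>s. \<alpha> + \<beta> * s) has_integral ((\<lambda>s. \<alpha> * s + \<beta> * s ^ 2 / 2) t - (\<lambda>s. \<alpha> * s + \<beta> * s^2/2) 0)) {0..t}"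
    apply (rule fundamental_theorem_of_calculus)
    using assms apply simp
    apply (rule has_real_derivative_iff_has_vector_derivative[THEN iffD1])
    apply (rule derivative_eq_intros | simp)+
    done
  from has_integral_scaleR_left[OF this, of a] show ?thesis by simp
qed

lemma concat:
  fixes f g h :: "real \<Rightarrow> 'a::banach"
  assumes c: "c \<ge> 0" and f: "\<And>t. t \<ge> 0 \<Longrightarrow> (f has_integral F t) {0..t}"
   and g: "\<And>t. t \<ge> 0 \<Longrightarrow> (g has_integral G t) {0..t}"
   and hf: "\<And>t. 0 \<le> t \<Longrightarrow> t < c \<Longrightarrow> h t = f t" and hg: "\<And>t. t > c \<Longrightarrow> h t = g (t - c)"
   and t: "t \<ge> 0"
  shows "(h has_integral (if t \<le> c then F t else F c + G (t - c))) {0..t}"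
proof (cases "t \<le> c")
  case True
  have "(h has_integral F t) {0..t}"
    by (rule has_integral_spike_finite[of "{c}" _ _ f]) (use True hf f t in auto)
  then show ?thesis using True by simp
next
  case False
  have 1: "(h has_integral F c) {0..c}"
    by (rule has_integral_spike_finite[of "{c}" _ _ f]) (use hf f c in auto)
  have "((\<lambda>x. g (x + (-c))) has_integral G (t-c)) {0 - (-c)..(t-c) - (-c)}"
    using has_integral_shift_real_ivl[OF g[of "t-c"], of "-c"] False by simp
  hence sh: "((\<lambda>x. g (x - c)) has_integral G (t-c)) {c..t}" by simp
  have 2: "(h has_integral G (t-c)) {c..t}"
    by (rule has_integral_spike_finite[of "{c}" _ _ "\<lambda>x. g (x - c)"]) (use hg sh in auto)
  from has_integral_combine[OF c _ 1 2] False show ?thesis by simp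
qed

lemma concat':
  fixes f g h :: "real \<Rightarrow> 'a::banach"
  assumes c: "c \<ge> 0" and f: "\<And>t. t \<ge> 0 \<Longrightarrow> (f has_integral F t) {0..t}"
   and g: "\<And>t. t \<ge> 0 \<Longrightarrow> (g has_integral G t) {0..t}"
   and hf: "\<And>t. 0 \<le> t \<Longrightarrow> t < c \<Longrightarrow> h t = f t" and hg: "\<And>t. t > c \<Longrightarrow> h t = g (t - c)"
   and t: "t \<ge> 0" and R: "R = (if t \<le> c then F t else F c + G (t - c))"
  shows "(h has_integral R) {0..t}"
  unfolding R by (rule concat[OF c f g hf hg t])

lemma half_two: "(x/2) *\<^sub>R (2 * a) = x *\<^sub>R (a::real^'n)"
  by (simp add: vec_eq_iff)

lemma const_int: fixes c :: "'a::banach" shows "t \<ge> 0 \<Longrightarrow> ((\<lambda>s. c) has_integral t *\<^sub>R c) {0..t}"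
  using poly_int[of t 1 0 c] by simp
lemma lin_int: fixes c :: "'a::banach" shows "t \<ge> 0 \<Longrightarrow> ((\<lambda>s. s *\<^sub>R c) has_integral (t ^ 2 / 2) *\<^sub>R c) {0..(t::real)}"
  using poly_int[of t 0 1 c] by simp
lemma aff_int: fixes c :: "'a::banach" shows "t \<ge> 0 \<Longrightarrow> ((\<lambda>s. (\<tau> - s) *\<^sub>R c) has_integral (\<tau>*t - t ^ 2 / 2) *\<^sub>R c) {0..(t::real)}"
  using poly_int[of t \<tau> "-1" c] by simp

lemma seg_mem: "0 \<le> u \<Longrightarrow> u \<le> 1 \<Longrightarrow> q + u *\<^sub>R (q' - q) \<in> closed_segment q q'"
  unfolding closed_segment_def by (rule CollectI, rule exI[of _ u]) (simp add: algebra_simps)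

lemma int0: "(f has_integral y) {0..0::real} \<Longrightarrow> y = 0"
  using has_integral_unique[OF _ has_integral_null_real[of 0 0]] by simp

lemma main:
  fixes qs :: "(real^'n) list"
  shows "qs \<noteq> [] \<Longrightarrow> hd qs \<in> S \<Longrightarrow> (\<forall>k < length qs - 1. closed_segment (qs!k) (qs!Suc k) \<subseteq> S) \<Longrightarrow>
   \<exists>V P. (\<forall>t\<ge>0. (bang_bang qs has_integral V t) {0..t}) \<and> (\<forall>t\<ge>0. (V has_integral P t) {0..t})
     \<and> V (bang_bang_time qs) = 0 \<and> P (bang_bang_time qs) = last qs - hd qs
     \<and> (\<forall>t\<in>{0..bang_bang_time qs}. hd qs + P t \<in> S)"
proof (induction qs rule: bang_bang_time.induct)
  case (1 q q' rest)
  have q'S: "q' \<in> S" using 1(4)[rule_format, of 0] by auto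
  have segr: "\<forall>k < length (q'#rest) - 1. closed_segment ((q'#rest)!k) ((q'#rest)!Suc k) \<subseteq> S"
  proof (intro allI impI)
    fix k assume "k < length (q'#rest) - 1"
    then show "closed_segment ((q'#rest)!k) ((q'#rest)!Suc k) \<subseteq> S"
      using 1(4)[rule_format, of "Suc k"] by simp
  qed
  obtain Vr Pr where
    IV: "\<And>t. t \<ge> 0 \<Longrightarrow> (bang_bang (q'#rest) has_integral Vr t) {0..t}" and
    IP: "\<And>t. t \<ge> 0 \<Longrightarrow> (Vr has_integral Pr t) {0..t}" and
    IT: "Vr (bang_bang_time (q'#rest)) = 0" "Pr (bang_bang_time (q'#rest)) = last (q'#rest) - hd (q'#rest)" and
    IS: "\<And>t. t \<in> {0..bang_bang_time (q'#rest)} \<Longrightarrow> hd (q'#rest) + Pr t \<in> S"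
    using 1(1)[OF _ _ segr] q'S by (metis list.distinct(1) list.sel(1))
  define r where "r = bang_bang (q'#rest)"
  define a where "a = edge_accel q q'"
  define \<tau> where "\<tau> = edge_time q q'"
  define Tr where "Tr = bang_bang_time (q'#rest)"
  have tau0: "\<tau> \<ge> 0" unfolding \<tau>_def by (rule edge_facts)
  have tauv: "(\<tau>^2) *\<^sub>R a = q' - q" unfolding \<tau>_def a_def by (rule edge_facts)
  have Tr0: "Tr \<ge> 0" unfolding Tr_def by (rule bbt_nonneg)
  have Vr0: "Vr 0 = 0" using IV[of 0] int0 by auto
  have Pr0: "Pr 0 = 0" using IP[of 0] int0 by auto
  have bb: "bang_bang (q#q'#rest) t = (if t < \<tau> then a else if t < 2*\<tau> then -a else r (t - 2*\<tau>))" for t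
    by (simp add: a_def \<tau>_def r_def)
  have T: "bang_bang_time (q#q'#rest) = 2*\<tau> + Tr" by (simp add: \<tau>_def Tr_def)
  define G1 where "G1 s = (if s \<le> \<tau> then s *\<^sub>R (-a) else \<tau> *\<^sub>R (-a) + Vr (s - \<tau>))" for s
  define V where "V t = (if t \<le> \<tau> then t *\<^sub>R a else \<tau> *\<^sub>R a + G1 (t - \<tau>))" for t
  define G2 where "G2 s = (if s \<le> \<tau> then (\<tau> * s - s ^ 2 / 2) *\<^sub>R a else (\<tau>^2/2) *\<^sub>R a + Pr (s - \<tau>))" for s
  define P where "P t = (if t \<le> \<tau> then (t ^ 2 / 2) *\<^sub>R a else (\<tau>^2/2) *\<^sub>R a + G2 (t - \<tau>))" for t
  have g1: "((\<lambda>s. if s < \<tau> then -a else r (s - \<tau>)) has_integral G1 s) {0..s}" if "s \<ge> 0" for s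
    unfolding G1_def
    by (rule concat[where f="\<lambda>_. -a" and g=r]) (use tau0 that const_int[where c="-a", simplified] IV in \<open>auto simp: r_def\<close>)
  have hv: "(bang_bang (q#q'#rest) has_integral V t) {0..t}" if "t \<ge> 0" for t
    unfolding V_def
    by (rule concat[where f="\<lambda>_. a" and g="\<lambda>s. if s < \<tau> then -a else r (s - \<tau>)"])
      (use tau0 that const_int g1 in \<open>auto simp del: bang_bang.simps simp: bb\<close>)
  have g2: "((\<lambda>s. \<tau> *\<^sub>R a + G1 s) has_integral G2 s) {0..s}" if "s \<ge> 0" for s
    unfolding G2_def
    by (rule concat'[where f="\<lambda>s. (\<tau> - s) *\<^sub>R a" and g=Vr and F="\<lambda>s. (\<tau> * s - s ^ 2 / 2) *\<^sub>R a"])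
      (use tau0 that aff_int IP in \<open>auto simp: G1_def scaleR_diff_left power2_eq_square half_two\<close>)
  have hp: "(V has_integral P t) {0..t}" if "t \<ge> 0" for t
    unfolding P_def
    by (rule concat[where f="\<lambda>s. s *\<^sub>R a" and g="\<lambda>s. \<tau> *\<^sub>R a + G1 s"])
      (use tau0 that lin_int g2 in \<open>auto simp: V_def\<close>)
  have ITr: "Vr Tr = 0" "Pr Tr = last (q#q'#rest) - q'" using IT by (simp_all add: Tr_def)
  have hh: "(x/2) *\<^sub>R a + (x/2) *\<^sub>R a = x *\<^sub>R a" for x
    by (simp flip: scaleR_left_distrib)
  have hh2: "(\<tau> * \<tau> - \<tau>^2/2) = \<tau>^2/2" by (simp add: power2_eq_square)
  have VT: "V (2*\<tau> + Tr) = 0"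
    using tau0 Tr0 Vr0 ITr(1) unfolding V_def G1_def by auto
  have PT: "P (2*\<tau> + Tr) = last (q#q'#rest) - q"
  proof (cases "\<tau> = 0")
    case True
    hence qq: "q' = q" using tauv by simp
    show ?thesis
    proof (cases "Tr = 0")
      case True
      then show ?thesis using \<open>\<tau> = 0\<close> ITr(2) Pr0 qq by (simp add: P_def)
    next
      case False
      then show ?thesis using \<open>\<tau> = 0\<close> ITr(2) Tr0 qq by (simp add: P_def G2_def)
    qed
  next
    case False
    hence tp: "\<tau> > 0" using tau0 by simp
    have e1: "P (2*\<tau> + Tr) = (\<tau>^2/2) *\<^sub>R a + G2 (\<tau> + Tr)"
      using tp Tr0 by (simp add: P_def)
    show ?thesis
    proof (cases "Tr = 0")
      case True
      have "G2 (\<tau> + Tr) = (\<tau>^2/2) *\<^sub>R a" using True by (simp add: G2_def hh2)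
      then show ?thesis using e1 hh[of "\<tau>^2"] tauv ITr(2) Pr0 True by simp
    next
      case False
      have "G2 (\<tau> + Tr) = (\<tau>^2/2) *\<^sub>R a + Pr Tr" using False Tr0 by (simp add: G2_def)
      then show ?thesis using e1 hh[of "\<tau>^2"] tauv ITr(2)
        by (simp add: add.assoc[symmetric])
    qed
  qed
  have qS: "q \<in> S" using 1(3) by simp
  have seg0: "closed_segment q q' \<subseteq> S" using 1(4)[rule_format, of 0] by simp
  have PS: "q + P t \<in> S" if t: "t \<in> {0..2*\<tau> + Tr}" for t
  proof (cases "t \<le> 2*\<tau>")
    case True
    obtain l where l: "0 \<le> l" "l \<le> \<tau>^2" "P t = l *\<^sub>R a"
    proof (cases "t \<le> \<tau>")
      case True
      show ?thesis
        apply (rule that[of "t^2/2"])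
        subgoal by simp
        subgoal proof -
          have "t*t \<le> \<tau>*\<tau>" using mult_mono[of t \<tau> t \<tau>] True t tau0 by auto
          moreover have "0 \<le> \<tau>*\<tau>" by simp
          ultimately show ?thesis unfolding power2_eq_square by linarith
        qed
        subgoal using True by (simp add: P_def)
        done
    next
      case False
      define u where "u = t - \<tau>"
      have u: "0 < u" "u \<le> \<tau>" using False \<open>t \<le> 2*\<tau>\<close> by (auto simp: u_def)
      have "P t = (\<tau>^2/2) *\<^sub>R a + (\<tau> * u - u^2/2) *\<^sub>R a"
        using False u by (simp add: P_def G2_def u_def)
      also have "\<dots> = (\<tau>^2/2 + (\<tau> * u - u^2/2)) *\<^sub>R a" by (simp add: scaleR_left_distrib)
      finally have e: "P t = (\<tau>^2/2 + (\<tau> * u - u^2/2)) *\<^sub>R a" .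
      have "0 \<le> (\<tau> - u)^2" by simp
      hence "\<tau>^2/2 + (\<tau> * u - u^2/2) \<le> \<tau>^2" by (simp add: power2_eq_square algebra_simps)
      moreover have "0 \<le> \<tau>^2/2 + (\<tau> * u - u^2/2)"
      proof -
        have a: "u*u \<le> \<tau>*u" using mult_right_mono[of u \<tau> u] u by simp
        have b: "0 \<le> \<tau>*\<tau>" by simp
        have c: "0 \<le> u*u" by simp
        show ?thesis using a b c unfolding power2_eq_square by linarith
      qed
      ultimately show ?thesis using that e by blast
    qed
    show ?thesis
    proof (cases "\<tau> = 0")
      case True
      then show ?thesis using l qS by simp
    next
      case False
      hence tp: "\<tau>^2 > 0" using tau0 by simp
      have "q + P t = q + (l / \<tau>^2) *\<^sub>R (q' - q)"
        using l(3) tauv tp by (simp flip: tauv)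
      also have "\<dots> \<in> closed_segment q q'"
        by (rule seg_mem) (use l tp in auto)
      finally show ?thesis using seg0 by blast
    qed
  next
    case False
    have "P t = (\<tau>^2/2) *\<^sub>R a + ((\<tau>^2/2) *\<^sub>R a + Pr (t - 2*\<tau>))"
      using False tau0 by (simp add: P_def G2_def)
    also have "\<dots> = (q' - q) + Pr (t - 2*\<tau>)" using hh[of "\<tau>^2"] tauv
      by (simp add: add.assoc[symmetric])
    finally have "q + P t = q' + Pr (t - 2*\<tau>)" by simp
    moreover have "q' + Pr (t - 2*\<tau>) \<in> S" using IS[of "t - 2*\<tau>"] False t by (simp add: Tr_def)
    ultimately show ?thesis by simp
  qed
  show ?case
    apply (rule exI[of _ V], rule exI[of _ P])
    unfolding T list.sel(1) using hv hp VT PT PS by blast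
next
  case ("2_1")
  then show ?case by simp
next
  case ("2_2" v)
  then show ?case by (intro exI[of _ "\<lambda>_. 0"]) auto
qed

theorem proposition6:
  fixes Cfree :: "(real^'n) set" and qs :: "(real^'n) list" and qI qG :: "real^'n"
  assumes "open Cfree"
    and "qI \<in> Cfree" and "qG \<in> Cfree"
    and "qs \<noteq> []" and "hd qs = qI" and "last qs = qG"
    and "\<forall>k < length qs - 1. closed_segment (qs ! k) (qs ! Suc k) \<subseteq> Cfree"
  shows "bang_bang qs integrable_on {0..bang_bang_time qs}
    \<and> (\<forall>t \<in> {0..bang_bang_time qs}. \<forall>i. \<bar>bang_bang qs t $ i\<bar> \<le> 1)
    \<and> (\<forall>t \<in> {0..bang_bang_time qs}. di_position qI (bang_bang qs) t \<in> Cfree)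
    \<and> di_position qI (bang_bang qs) (bang_bang_time qs) = qG
    \<and> di_velocity (bang_bang qs) (bang_bang_time qs) = 0"
proof -
  obtain V P where
    hv: "\<forall>t\<ge>0. (bang_bang qs has_integral V t) {0..t}" and
    hp: "\<forall>t\<ge>0. (V has_integral P t) {0..t}" and
    VT: "V (bang_bang_time qs) = 0" and PT: "P (bang_bang_time qs) = last qs - hd qs" and
    PS: "\<forall>t\<in>{0..bang_bang_time qs}. hd qs + P t \<in> Cfree"
    using main[OF assms(4) _ assms(7)] assms(2,5) by blast
  define T where "T = bang_bang_time qs"
  have T0: "T \<ge> 0" unfolding T_def by (rule bbt_nonneg)
  have vel: "di_velocity (bang_bang qs) t = V t" if "t \<ge> 0" for t
    unfolding di_velocity_def using hv that by (simp add: integral_unique)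
  have pos: "di_position qI (bang_bang qs) t = qI + P t" if "t \<ge> 0" for t
  proof -
    have "integral {0..t} (di_velocity (bang_bang qs)) = integral {0..t} V"
      by (rule integral_cong) (simp add: vel)
    also have "\<dots> = P t" using hp that by (simp add: integral_unique)
    finally show ?thesis unfolding di_position_def by simp
  qed
  show ?thesis
  proof (intro conjI ballI allI)
    show "bang_bang qs integrable_on {0..bang_bang_time qs}"
      using hv T0 unfolding T_def by blast
    show "\<bar>bang_bang qs t $ i\<bar> \<le> 1" for t i by (rule bb_bound)
    show "di_position qI (bang_bang qs) t \<in> Cfree" if "t \<in> {0..bang_bang_time qs}" for t
      using pos[of t] PS that assms(5) by auto
    show "di_position qI (bang_bang qs) (bang_bang_time qs) = qG"
      using pos[of "bang_bang_time qs"] T0 PT assms(5,6) unfolding T_def by simp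
    show "di_velocity (bang_bang qs) (bang_bang_time qs) = 0"
      using vel[of "bang_bang_time qs"] T0 VT unfolding T_def by simp
  qed
qed

end
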